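(* Let $r_1,\dots,r_n$ be establishment records with nonnegative confidential attributes $A_1,\dots,A_m$, let $\psi$ be a neighbor function with distance parameters $\sigma_1,\dots,\sigma_m>0$, and let $\mu_1,\dots,\mu_m>0$. For $j=1,\dots,n$ and $i=1,\dots,m$ define the noisy values $o_{j,i}=\psi(r_j[A_i])+Z_{j,i}$ where the $Z_{j,i}\sim N(0,\sigma_i^2/\mu_i^2)$ are independent. Let $\beta\in(0,1)$, define $\tau=\Phi^{-1}\big((1-\beta)^{1/(mn)}\big)$, and define $u_{j,i}=\psi^{-1}\big(o_{j,i}+\sigma_i\tau/\mu_i\big)$. Then with probability $1-\beta$ the inequalities $r_j[A_i]\leq u_{j,i}$ hold simultaneously for all $j$ and $i$.
   Context: $\Phi$ denotes the standard normal CDF. A neighbor function is a function $\psi:\mathbb{R}_{\geq 0}\to\mathbb{R}$ that is strictly increasing, continuous, concave, and such that $x\mapsto\psi(e^{x})$ is convex; $\psi^{-1}$ denotes its inverse. $r_j[A_i]\geq 0$ denotes the value of confidential attribute $A_i$ in record $r_j$. *)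

theory Defs
  imports "HOL-Probability.Probability"
begin

definition std_normal_cdf :: "real \<Rightarrow> real" where
  "std_normal_cdf x = measure (density lborel std_normal_density) {..x}"

definition std_normal_cdf_inv :: "real \<Rightarrow> real" where
  "std_normal_cdf_inv p = inv std_normal_cdf p"

definition neighbor_function :: "(real \<Rightarrow> real) \<Rightarrow> bool" where
  "neighbor_function \<psi> \<longleftrightarrow>
     strict_mono_on {0..} \<psi> \<and> continuous_on {0..} \<psi> \<and> concave_on {0..} \<psi> \<and>
     convex_on UNIV (\<lambda>x. \<psi> (exp x))"

definition nf_inv :: "(real \<Rightarrow> real) \<Rightarrow> real \<Rightarrow> real" where
  "nf_inv \<psi> y = the_inv_into {0..} \<psi> y"

end

theory Submission
  imports Defs
begin


lemma Phi_cont: "continuous_on UNIV std_normal_cdf"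
proof -
  let ?N = "density lborel std_normal_density"
  interpret real_distribution ?N
    by (simp add: real_distribution_def real_distribution_axioms_def prob_space_normal_density)
  have eq: "std_normal_cdf = cdf ?N" by (simp add: fun_eq_iff cdf_def std_normal_cdf_def)
  have "measure ?N {x} = 0" for x
  proof -
    have "{x} \<in> null_sets ?N"
    proof -
      have "AE y in lborel. y \<in> {x} \<longrightarrow> std_normal_density y = 0"
        by (rule AE_I'[of "{x}"]) auto
      then show ?thesis by (subst null_sets_density_iff) auto
    qed
    then show ?thesis by (simp add: measure_def emeasure_density)
  qed
  then show ?thesis unfolding eq by (simp add: continuous_on_eq_continuous_at isCont_cdf)
qed

lemma Phi_surj:
  assumes "0 < p" "p < 1"
  shows "std_normal_cdf (std_normal_cdf_inv p) = p"
proof -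
  let ?N = "density lborel std_normal_density"
  interpret real_distribution ?N
    by (simp add: real_distribution_def real_distribution_axioms_def prob_space_normal_density)
  have eq: "std_normal_cdf = cdf ?N" by (simp add: fun_eq_iff cdf_def std_normal_cdf_def)
  have "eventually (\<lambda>x. cdf ?N x < p) at_bot"
    using cdf_lim_at_bot assms(1) by (rule order_tendstoD)
  then obtain a where a: "\<And>x. x \<le> a \<Longrightarrow> cdf ?N x < p" by (auto simp: eventually_at_bot_linorder)
  have "eventually (\<lambda>x. cdf ?N x > p) at_top"
    using cdf_lim_at_top_prob assms(2) by (rule order_tendstoD)
  then obtain b where b: "\<And>x. x \<ge> b \<Longrightarrow> cdf ?N x > p" by (auto simp: eventually_at_top_linorder)
  have "\<exists>x. min a b \<le> x \<and> x \<le> b \<and> std_normal_cdf x = p"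
    apply (rule IVT')
    using a b Phi_cont by (auto intro: less_imp_le continuous_on_subset simp: eq)
  then have "p \<in> range std_normal_cdf" by auto
  then show ?thesis unfolding std_normal_cdf_inv_def by (rule f_inv_into_f)
qed


lemma nf_surj:
  assumes nf: "neighbor_function \<psi>" and y: "\<psi> 0 \<le> y"
  shows "\<exists>x\<ge>0. \<psi> x = y"
proof -
  have sm: "strict_mono_on {0..} \<psi>" and ct: "continuous_on {0..} \<psi>"
    and cv: "convex_on UNIV (\<lambda>x. \<psi> (exp x))"
    using nf by (auto simp: neighbor_function_def)
  define a where "a = \<psi> (exp 0)"
  define b where "b = \<psi> (exp 1)"
  have ab: "a < b" unfolding a_def b_def
    by (rule strict_mono_onD[OF sm]) auto
  have key: "\<psi> (exp t) \<ge> a + t * (b - a)" if t: "t \<ge> 1" for t :: real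
  proof -
    have "\<psi> (exp ((1 - 1/t) *\<^sub>R 0 + (1/t) *\<^sub>R t)) \<le> (1 - 1/t) * \<psi> (exp 0) + (1/t) * \<psi> (exp t)"
      by (rule convex_onD[OF cv]) (use t in auto)
    also have "(1 - 1/t) *\<^sub>R 0 + (1/t) *\<^sub>R t = (1::real)" using t by simp
    finally have "b \<le> (1 - 1/t) * a + (1/t) * \<psi> (exp t)" unfolding a_def b_def .
    then have "t * b \<le> t * ((1 - 1/t) * a + (1/t) * \<psi> (exp t))" using t by simp
    also have "\<dots> = t * a - a + \<psi> (exp t)" using t by (simp add: field_simps)
    finally show ?thesis by (simp add: algebra_simps)
  qed
  define t where "t = max 1 ((y - a) / (b - a))"
  have t1: "t \<ge> 1" by (simp add: t_def)
  have "t * (b - a) \<ge> y - a"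
  proof -
    have "(y - a) / (b - a) \<le> t" by (simp add: t_def)
    then show ?thesis using ab by (simp add: pos_divide_le_eq)
  qed
  with key[OF t1] have ge: "y \<le> \<psi> (exp t)" by simp
  have "\<exists>x. 0 \<le> x \<and> x \<le> exp t \<and> \<psi> x = y"
    by (rule IVT') (use y ge ct in \<open>auto intro: continuous_on_subset less_imp_le\<close>)
  then show ?thesis by auto
qed

lemma nf_inv_char:
  assumes nf: "neighbor_function \<psi>" and r: "0 \<le> r"
  shows "r \<le> nf_inv \<psi> y \<longleftrightarrow> (\<psi> 0 \<le> y \<and> \<psi> r \<le> y) \<or> (y < \<psi> 0 \<and> r \<le> The (\<lambda>x::real. False))"
proof (cases "\<psi> 0 \<le> y")
  case True
  have sm: "strict_mono_on {0..} \<psi>" using nf by (auto simp: neighbor_function_def)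
  have inj: "inj_on \<psi> {0..}" using sm by (rule strict_mono_on_imp_inj_on)
  obtain x where x: "x \<ge> 0" "\<psi> x = y" using nf_surj[OF nf True] by auto
  have "nf_inv \<psi> y = x" unfolding nf_inv_def using x inj
    by (auto intro: the_inv_into_f_eq)
  moreover have "r \<le> x \<longleftrightarrow> \<psi> r \<le> \<psi> x"
    using sm r x(1) by (metis atLeast_iff le_less strict_mono_onD linorder_not_le)
  ultimately show ?thesis using True x by auto
next
  case False
  have sm: "strict_mono_on {0..} \<psi>" using nf by (auto simp: neighbor_function_def)
  have mono: "\<psi> 0 \<le> \<psi> x" if "x \<ge> 0" for x
    using sm that by (metis atLeast_iff order.refl le_less strict_mono_onD)
  have "(\<lambda>x. x \<in> {0..} \<and> \<psi> x = y) = (\<lambda>x. False)"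
    using False mono by force
  then have "nf_inv \<psi> y = The (\<lambda>x::real. False)"
    unfolding nf_inv_def the_inv_into_def by simp
  then show ?thesis using False by auto
qed


lemma normal_tail:
  assumes P: "prob_space M" and Z: "distributed M lborel Z (normal_density 0 s)" and s: "0 < s"
  shows "measure M {\<omega>\<in>space M. -(s * t) \<le> Z \<omega>} = std_normal_cdf t"
proof -
  interpret prob_space M by (rule P)
  have "distributed M lborel (\<lambda>x. 0 + (-1/s) * Z x) (normal_density (0 + (-1/s) * 0) (\<bar>-1/s\<bar> * s))"
    by (rule normal_density_affine[OF Z s]) (use s in auto)
  then have Y: "distributed M lborel (\<lambda>x. - Z x / s) std_normal_density"
    using s by simp
  have Ym: "(\<lambda>x. - Z x / s) \<in> measurable M lborel" using distributed_measurable[OF Y] .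
  have "measure M ((\<lambda>x. - Z x / s) -` {..t} \<inter> space M) = measure (distr M lborel (\<lambda>x. - Z x / s)) {..t}"
    by (rule measure_distr[symmetric]) (use Ym in auto)
  also have "\<dots> = std_normal_cdf t"
    unfolding distributed_distr_eq_density[OF Y] std_normal_cdf_def ..
  also have "(\<lambda>x. - Z x / s) -` {..t} \<inter> space M = {\<omega>\<in>space M. -(s * t) \<le> Z \<omega>}"
    using s by (auto simp: field_simps)
  finally show ?thesis .
qed

theorem theorem6p7:
  fixes M :: "'a measure"
    and n m :: nat
    and r :: "nat \<Rightarrow> nat \<Rightarrow> real"
    and \<psi> :: "real \<Rightarrow> real"
    and \<sigma> \<mu> :: "nat \<Rightarrow> real"
    and Z :: "nat \<Rightarrow> nat \<Rightarrow> 'a \<Rightarrow> real"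
    and \<beta> :: real
  assumes "prob_space M"
    and r_nonneg: "\<And>j i. j \<in> {1..n} \<Longrightarrow> i \<in> {1..m} \<Longrightarrow> 0 \<le> r j i"
    and "neighbor_function \<psi>"
    and \<sigma>_pos: "\<And>i. i \<in> {1..m} \<Longrightarrow> 0 < \<sigma> i"
    and \<mu>_pos: "\<And>i. i \<in> {1..m} \<Longrightarrow> 0 < \<mu> i"
    and Z_distr: "\<And>j i. j \<in> {1..n} \<Longrightarrow> i \<in> {1..m} \<Longrightarrow>
         distributed M lborel (Z j i) (normal_density 0 (\<sigma> i / \<mu> i))"
    and Z_indep: "prob_space.indep_vars M (\<lambda>_. borel) (\<lambda>(j, i). Z j i) ({1..n} \<times> {1..m})"
    and "0 < \<beta>" and "\<beta> < 1"
  shows "let \<tau> = std_normal_cdf_inv ((1 - \<beta>) powr (1 / real (m * n)));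
             ob = (\<lambda>j i \<omega>. \<psi> (r j i) + Z j i \<omega>);
             u = (\<lambda>j i \<omega>. nf_inv \<psi> (ob j i \<omega> + \<sigma> i * \<tau> / \<mu> i))
         in measure M {\<omega> \<in> space M. \<forall>j\<in>{1..n}. \<forall>i\<in>{1..m}. r j i \<le> u j i \<omega>} \<ge> 1 - \<beta>"
  
proof -
  interpret prob_space M by fact
  define \<tau> where "\<tau> = std_normal_cdf_inv ((1 - \<beta>) powr (1 / real (m * n)))"
  define E where "E = {\<omega> \<in> space M. \<forall>j\<in>{1..n}. \<forall>i\<in>{1..m}. r j i \<le> nf_inv \<psi> (\<psi> (r j i) + Z j i \<omega> + \<sigma> i * \<tau> / \<mu> i)}"
  have "1 - \<beta> \<le> measure M E"
  proof (cases "m * n = 0")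
    case True
    then have "E = space M" unfolding E_def by auto
    then show ?thesis using \<open>0 < \<beta>\<close> by (simp add: prob_space)
  next
    case False
    define I where "I = {1..n} \<times> {1..m}"
    have I: "finite I" "I \<noteq> {}" "card I = m * n" using False by (auto simp: I_def card_cartesian_product)
    define p where "p = (1 - \<beta>) powr (1 / real (m * n))"
    have p: "0 < p" "p < 1" unfolding p_def using False \<open>0 < \<beta>\<close> \<open>\<beta> < 1\<close>
      using powr_less_mono2[of "1 / real (m * n)" "1 - \<beta>" 1] by auto
    have Phi: "std_normal_cdf \<tau> = p" unfolding \<tau>_def p_def[symmetric] by (rule Phi_surj[OF p])
    have pp: "p ^ (m * n) = 1 - \<beta>" unfolding p_def using \<open>\<beta> < 1\<close> False
      by (simp add: powr_realpow[symmetric] powr_powr)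
    have Zm: "Z j i \<in> borel_measurable M" if "j \<in> {1..n}" "i \<in> {1..m}" for j i
      using distributed_measurable[OF Z_distr[OF that]] by simp
    define A where "A = (\<lambda>k::nat\<times>nat. {-(\<sigma> (snd k) / \<mu> (snd k) * \<tau>)..})"
    have "prob (\<Inter>k\<in>I. (\<lambda>(j, i). Z j i) k -` A k \<inter> space M) = (\<Prod>k\<in>I. prob ((\<lambda>(j, i). Z j i) k -` A k \<inter> space M))"
      by (rule indep_varsD_finite[OF Z_indep[unfolded I_def[symmetric]] I(2,1)]) (auto simp: A_def)
    also have "\<dots> = (\<Prod>k\<in>I. p)"
    proof (rule prod.cong)
      fix k assume k: "k \<in> I"
      then obtain j i where ji: "k = (j, i)" "j \<in> {1..n}" "i \<in> {1..m}" by (auto simp: I_def)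
      have "(\<lambda>(j, i). Z j i) k -` A k \<inter> space M = {\<omega>\<in>space M. -(\<sigma> i / \<mu> i * \<tau>) \<le> Z j i \<omega>}"
        by (auto simp: A_def ji)
      also have "prob \<dots> = p"
        using normal_tail[OF \<open>prob_space M\<close> Z_distr[OF ji(2,3)]] \<sigma>_pos[OF ji(3)] \<mu>_pos[OF ji(3)] Phi by simp
      finally show "prob ((\<lambda>(j, i). Z j i) k -` A k \<inter> space M) = p" .
    qed simp
    also have "\<dots> = 1 - \<beta>" using I pp by simp
    finally have eqP: "prob (\<Inter>k\<in>I. (\<lambda>(j, i). Z j i) k -` A k \<inter> space M) = 1 - \<beta>" .
    have sub: "(\<Inter>k\<in>I. (\<lambda>(j, i). Z j i) k -` A k \<inter> space M) \<subseteq> E"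
    proof
      fix \<omega> assume w: "\<omega> \<in> (\<Inter>k\<in>I. (\<lambda>(j, i). Z j i) k -` A k \<inter> space M)"
      then have sp: "\<omega> \<in> space M" using I(2) by auto
      have "r j i \<le> nf_inv \<psi> (\<psi> (r j i) + Z j i \<omega> + \<sigma> i * \<tau> / \<mu> i)"
        if ji: "j \<in> {1..n}" "i \<in> {1..m}" for j i
      proof -
        have "(j, i) \<in> I" using ji by (auto simp: I_def)
        with w have "\<omega> \<in> (\<lambda>(j, i). Z j i) (j, i) -` A (j, i) \<inter> space M" by blast
        then have "-(\<sigma> i / \<mu> i * \<tau>) \<le> Z j i \<omega>" by (simp add: A_def)
        then have ge: "\<psi> (r j i) \<le> \<psi> (r j i) + Z j i \<omega> + \<sigma> i * \<tau> / \<mu> i" by simp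
        have r0: "0 \<le> r j i" by (rule r_nonneg[OF ji])
        have "\<psi> 0 \<le> \<psi> (r j i)"
          using \<open>neighbor_function \<psi>\<close> r0 unfolding neighbor_function_def
          by (metis atLeast_iff order.refl le_less strict_mono_onD)
        then show ?thesis using ge by (subst nf_inv_char[OF \<open>neighbor_function \<psi>\<close> r0]) auto
      qed
      then show "\<omega> \<in> E" using sp by (auto simp: E_def)
    qed
    define B where "B = (\<lambda>k::nat\<times>nat. {\<omega> \<in> space M. r (fst k) (snd k) \<le> nf_inv \<psi> (\<psi> (r (fst k) (snd k)) + Z (fst k) (snd k) \<omega> + \<sigma> (snd k) * \<tau> / \<mu> (snd k))})"
    have EB: "E = (\<Inter>k\<in>I. B k)" 
    proof
      show "E \<subseteq> (\<Inter>k\<in>I. B k)" by (auto simp: E_def B_def I_def)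
      show "(\<Inter>k\<in>I. B k) \<subseteq> E"
      proof
        fix x assume x: "x \<in> (\<Inter>k\<in>I. B k)"
        obtain k where "k \<in> I" using I(2) by auto
        then have "x \<in> space M" using x by (auto simp: B_def)
        then show "x \<in> E" using x by (auto simp: E_def B_def I_def)
      qed
    qed
    have "B k \<in> events" if k: "k \<in> I" for k
    proof -
      obtain j i where ji: "k = (j, i)" "j \<in> {1..n}" "i \<in> {1..m}" using k by (auto simp: I_def)
      have [measurable]: "Z j i \<in> borel_measurable M" by (rule Zm[OF ji(2,3)])
      define c where "c = The (\<lambda>x::real. False)"
      have "B k = {\<omega> \<in> space M. (\<psi> 0 \<le> \<psi> (r j i) + Z j i \<omega> + \<sigma> i * \<tau> / \<mu> i \<and> \<psi> (r j i) \<le> \<psi> (r j i) + Z j i \<omega> + \<sigma> i * \<tau> / \<mu> i)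
           \<or> (\<psi> (r j i) + Z j i \<omega> + \<sigma> i * \<tau> / \<mu> i < \<psi> 0 \<and> r j i \<le> c)}"
        unfolding B_def ji c_def by (simp add: nf_inv_char[OF \<open>neighbor_function \<psi>\<close> r_nonneg[OF ji(2,3)]])
      also have "\<dots> \<in> events" by measurable
      finally show ?thesis .
    qed
    then have "E \<in> events" unfolding EB using I by (intro sets.finite_INT) auto
    then show ?thesis using eqP sub finite_measure_mono by metis
  qed
  then show ?thesis unfolding Let_def E_def \<tau>_def by simp
qed

end
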